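(* Let $A\in\mathcal{S}_n$, $b_1\in\mathbb{R}^n_{++}$, and consider the problem $(\bar P_1)$: $\bar f_1^*=\sup\{\lambda\in\mathbb{R}: A-\lambda b_1b_1^T\in\mathcal{C}_n\}$. (1) If $(\bar P_1)$ is infeasible, then $A\notin\mathcal{C}_n$. (2) If $(\bar P_1)$ is feasible, then: (i) if $\bar f_1^*<0$, then $A\notin\mathcal{C}_n$; (ii) if $\bar f_1^*=0$, then $A\in\operatorname{bd}(\mathcal{C}_n)$; (iii) if $\bar f_1^*>0$ and $\operatorname{rank}(A)<n$, then $A\in\operatorname{bd}(\mathcal{C}_n)$; (iv) if $\bar f_1^*>0$ and $\operatorname{rank}(A)=n$, then $A\in\operatorname{int}(\mathcal{C}_n)$.
   Context: $\mathcal{S}_n$: real symmetric $n\times n$ matrices. $\mathcal{C}_n=\{BB^T: B\in\mathbb{R}^{n\times m}\text{ entrywise nonnegative},\ m\ge1\}$ is the completely positive cone; $\operatorname{int}$ and $\operatorname{bd}$ denote interior and boundary in $\mathcal{S}_n$. $\mathbb{R}^n_{++}=\{x\in\mathbb{R}^n: x>0\text{ entrywise}\}$. *)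

theory Defs
  imports "HOL-Analysis.Analysis"
begin

definition sym_mats :: "(real^'n^'n) set" where
  "sym_mats = {A. transpose A = A}"

text \<open>Completely positive cone: all B B^T with B an entrywise nonnegative
  n x m real matrix, m >= 1. B is given by its entries B i k for k < m.\<close>
definition cp_cone :: "(real^'n^'n) set" where
  "cp_cone = {A. \<exists>m::nat. m \<ge> 1 \<and> (\<exists>B :: 'n \<Rightarrow> nat \<Rightarrow> real.
       (\<forall>i. \<forall>k<m. B i k \<ge> 0) \<and>
       (\<forall>i j. A $ i $ j = (\<Sum>k<m. B i k * B j k)))}"

definition outer :: "real^'n \<Rightarrow> real^'n^'n" where
  "outer b = (\<chi> i j. b $ i * b $ j)"

definition feas1 :: "real^'n^'n \<Rightarrow> real^'n \<Rightarrow> real set" where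
  "feas1 A b = {t. A - t *\<^sub>R outer b \<in> cp_cone}"

definition fstar1 :: "real^'n^'n \<Rightarrow> real^'n \<Rightarrow> ereal" where
  "fstar1 A b = (SUP t\<in>feas1 A b. ereal t)"

end

theory Submission
  imports Defs
begin


lemma sum_split_add: "(\<Sum>k<m1+m2. f k) = (\<Sum>k<m1. f k) + (\<Sum>k<m2. f (m1+k::nat))"
  by (induction m2) (auto simp: add.assoc)

lemma cp_add:
  fixes X Y :: "real^'n^'n"
  assumes "X \<in> cp_cone" "Y \<in> cp_cone" shows "X + Y \<in> cp_cone"
proof -
  obtain m1 and B1 :: "'n \<Rightarrow> nat \<Rightarrow> real" where m1: "m1 \<ge> 1" "\<forall>i. \<forall>k<m1. B1 i k \<ge> 0" "\<forall>i j. X $ i $ j = (\<Sum>k<m1. B1 i k * B1 j k)"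
    using assms(1) unfolding cp_cone_def by blast
  obtain m2 and B2 :: "'n \<Rightarrow> nat \<Rightarrow> real" where m2: "m2 \<ge> 1" "\<forall>i. \<forall>k<m2. B2 i k \<ge> 0" "\<forall>i j. Y $ i $ j = (\<Sum>k<m2. B2 i k * B2 j k)"
    using assms(2) unfolding cp_cone_def by blast
  define B where "B i k = (if k < m1 then B1 i k else B2 i (k - m1))" for i k
  have "\<forall>i. \<forall>k<m1+m2. B i k \<ge> 0" using m1 m2 by (auto simp: B_def)
  moreover have "\<forall>i j. (X+Y) $ i $ j = (\<Sum>k<m1+m2. B i k * B j k)"
  proof (intro allI)
    fix i j
    have "(\<Sum>k<m1+m2. B i k * B j k) = (\<Sum>k<m1. B i k * B j k) + (\<Sum>k<m2. B i (m1+k) * B j (m1+k))"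
      by (rule sum_split_add)  
    also have "\<dots> = X$i$j + Y$i$j" using m1 m2 by (simp add: B_def)
    finally show "(X+Y) $ i $ j = (\<Sum>k<m1+m2. B i k * B j k)" by simp
  qed
  ultimately show ?thesis unfolding cp_cone_def using m1 by (intro CollectI exI[of _ "m1+m2"] conjI) auto
qed

lemma cp_outer:
  assumes "s \<ge> 0" "\<forall>i. b$i \<ge> 0" shows "s *\<^sub>R outer b \<in> cp_cone"
  unfolding cp_cone_def outer_def
  apply (intro CollectI exI[of _ 1] conjI exI[of _ "\<lambda>i k. sqrt s * b $ i"])
  using assms by (auto simp: mult_ac)

lemma feas_down:
  assumes "\<forall>i. b$i \<ge> 0" "t \<in> feas1 A b" "s \<le> t" shows "s \<in> feas1 A b"
proof -
  have e: "A - s *\<^sub>R outer b = (A - t *\<^sub>R outer b) + (t - s) *\<^sub>R outer b"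
    by (simp add: algebra_simps)
  have "A - t *\<^sub>R outer b \<in> cp_cone" using assms(2) unfolding feas1_def by simp
  moreover have "(t - s) *\<^sub>R outer b \<in> cp_cone" using assms(1,3) by (intro cp_outer) auto
  ultimately show ?thesis unfolding feas1_def mem_Collect_eq e by (rule cp_add)
qed

lemma cp_psd:
  fixes X :: "real^'n^'n"
  assumes "X \<in> cp_cone" shows "x \<bullet> (X *v x) \<ge> 0"
proof -
  obtain m and B :: "'n \<Rightarrow> nat \<Rightarrow> real" where m: "\<forall>i j. X $ i $ j = (\<Sum>k<m. B i k * B j k)"
    using assms unfolding cp_cone_def by blast
  have "x \<bullet> (X *v x) = (\<Sum>i\<in>UNIV. \<Sum>j\<in>UNIV. \<Sum>k<m. (x$i * B i k) * (x$j * B j k))"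
    by (simp add: inner_vec_def matrix_vector_mult_def m sum_distrib_left mult_ac)
  also have "\<dots> = (\<Sum>i\<in>UNIV. \<Sum>k<m. \<Sum>j\<in>UNIV. (x$i * B i k) * (x$j * B j k))"
    by (rule sum.cong[OF refl], rule sum.swap)
  also have "\<dots> = (\<Sum>k<m. \<Sum>i\<in>UNIV. \<Sum>j\<in>UNIV. (x$i * B i k) * (x$j * B j k))"
    by (rule sum.swap)
  also have "\<dots> = (\<Sum>k<m. (\<Sum>i\<in>UNIV. x$i * B i k)^2)"
    by (simp add: power2_eq_square sum_product)
  also have "\<dots> \<ge> 0" by (simp add: sum_nonneg)
  finally show ?thesis .
qed

lemma cp_sym: assumes "X \<in> cp_cone" shows "X \<in> sym_mats"
  using assms unfolding cp_cone_def sym_mats_def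
  by (auto simp: transpose_def vec_eq_iff mult.commute)



lemma rot_step:
  fixes p c :: "'n::finite \<Rightarrow> real"
  assumes p: "\<forall>i. p i > 0" and c: "\<forall>i. c i \<ge> 0"
  shows "\<exists>p' d. (\<forall>i. p' i > 0) \<and> (\<forall>i. d i > 0) \<and>
     (\<forall>i j. p i * p j + c i * c j = p' i * p' j + d i * d j)"
proof -
  define s where "s = 1 + (\<Sum>i\<in>UNIV. c i / p i)"
  define \<beta> where "\<beta> = 1 / sqrt (1 + s^2)"
  define \<alpha> where "\<alpha> = s * \<beta>"
  have s0: "s > 0" unfolding s_def using p c by (smt (verit) divide_nonneg_pos sum_nonneg)
  have cs: "c i < s * p i" for i
  proof -
    have "c i / p i \<le> (\<Sum>i\<in>UNIV. c i / p i)"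
      by (rule member_le_sum) (use p c in \<open>auto intro: divide_nonneg_pos\<close>)
    hence "c i / p i < s" unfolding s_def by simp
    thus ?thesis using p by (simp add: divide_less_eq)
  qed
  have b0: "\<beta> > 0" unfolding \<beta>_def by (simp add: add_pos_nonneg)
  have ab: "\<alpha>^2 + \<beta>^2 = 1"
  proof -
    have "\<alpha>^2 + \<beta>^2 = (1 + s^2) * \<beta>^2" unfolding \<alpha>_def by (simp add: algebra_simps power2_eq_square)
    also have "\<dots> = 1" unfolding \<beta>_def
      by (simp add: power_divide) (smt (verit) real_sqrt_pow2 zero_le_power2)
    finally show ?thesis .
  qed
  define p' where "p' i = \<alpha> * p i - \<beta> * c i" for i
  define d where "d i = \<alpha> * c i + \<beta> * p i" for i
  have "\<forall>i. p' i > 0"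
  proof
    fix i
    have "p' i = \<beta> * (s * p i - c i)" unfolding p'_def \<alpha>_def by (simp add: algebra_simps)
    thus "p' i > 0" using b0 cs[of i] by simp
  qed
  moreover have "\<forall>i. d i > 0" unfolding d_def using b0 s0 p c
    by (smt (verit, best) \<alpha>_def mult_nonneg_nonneg mult_pos_pos)
  moreover have "\<forall>i j. p i * p j + c i * c j = p' i * p' j + d i * d j"
  proof (intro allI)
    fix i j
    have "p' i * p' j + d i * d j = (\<alpha>^2 + \<beta>^2) * (p i * p j + c i * c j)"
      unfolding p'_def d_def by (simp add: algebra_simps power2_eq_square)
    thus "p i * p j + c i * c j = p' i * p' j + d i * d j" using ab by simp
  qed
  ultimately show ?thesis by blast
qed

lemma pos_fact:
  fixes p :: "'n::finite \<Rightarrow> real" and B :: "'n \<Rightarrow> nat \<Rightarrow> real"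
  assumes "\<forall>i. p i > 0" "\<forall>i. \<forall>k<m. B i k \<ge> 0"
  shows "\<exists>G. (\<forall>i. \<forall>k<Suc m. G i k > 0) \<and>
     (\<forall>i j. p i * p j + (\<Sum>k<m. B i k * B j k) = (\<Sum>k<Suc m. G i k * G j k))"
  using assms
proof (induction m arbitrary: p)
  case 0
  show ?case using 0 by (intro exI[of _ "\<lambda>i k. p i"]) auto
next
  case (Suc m)
  obtain p' d where pd: "\<forall>i. p' i > 0" "\<forall>i. d i > 0"
    "\<forall>i j. p i * p j + B i m * B j m = p' i * p' j + d i * d j"
    using rot_step[of p "\<lambda>i. B i m"] Suc.prems by auto
  obtain G where G: "\<forall>i. \<forall>k<Suc m. G i k > 0"
    "\<forall>i j. p' i * p' j + (\<Sum>k<m. B i k * B j k) = (\<Sum>k<Suc m. G i k * G j k)"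
    using Suc.IH[of p'] Suc.prems pd(1) by auto
  define G' where "G' i k = (if k = Suc m then d i else G i k)" for i k
  have "\<forall>i. \<forall>k<Suc (Suc m). G' i k > 0" using G pd unfolding G'_def by (auto simp: less_Suc_eq)
  moreover have "\<forall>i j. p i * p j + (\<Sum>k<Suc m. B i k * B j k) = (\<Sum>k<Suc (Suc m). G' i k * G' j k)"
  proof (intro allI)
    fix i j
    have "(\<Sum>k<Suc (Suc m). G' i k * G' j k) = (\<Sum>k<Suc m. G i k * G j k) + d i * d j"
      unfolding G'_def by simp
    also have "\<dots> = p i * p j + (\<Sum>k<Suc m. B i k * B j k)"
      using G(2)[rule_format, of i j] pd(3)[rule_format, of i j] by simp
    finally show "p i * p j + (\<Sum>k<Suc m. B i k * B j k) = (\<Sum>k<Suc (Suc m). G' i k * G' j k)" by simp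
  qed
  ultimately show ?case by blast
qed



lemma transpose_zero[simp]: "transpose (0::real^'n^'m) = 0"
  by (simp add: transpose_def vec_eq_iff)
lemma transpose_add: "transpose (X + Y) = transpose X + transpose (Y::real^'n^'m)"
  by (simp add: transpose_def vec_eq_iff)
lemma transpose_diff: "transpose (X - Y) = transpose X - transpose (Y::real^'n^'m)"
  by (simp add: transpose_def vec_eq_iff)
lemma matrix_add_rdistrib': "((X + Y) ** Z) = X ** Z + Y ** (Z::real^'p^'n)"
  by (simp add: matrix_matrix_mult_def vec_eq_iff sum.distrib algebra_simps)
lemma matrix_diff_rdistrib': "((X - Y) ** Z) = X ** Z - Y ** (Z::real^'p^'n)"
  by (simp add: matrix_matrix_mult_def vec_eq_iff sum_subtractf algebra_simps)
lemma matrix_diff_ldistrib': "(Z ** (X - Y)) = Z ** X - Z ** (Y::real^'p^'n)"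
  by (simp add: matrix_matrix_mult_def vec_eq_iff sum_subtractf algebra_simps)

lemma bil: fixes A :: "real^'n^'n" shows "bounded_bilinear (\<lambda>U V::real^'n^'n. U ** A ** transpose V)"
proof -
  have "bilinear (\<lambda>U V::real^'n^'n. U ** A ** transpose V)"
    unfolding bilinear_def
    by (intro conjI allI linearI)
       (simp_all add: transpose_add matrix_add_ldistrib transpose_scalar matrix_scalar_ac scalar_matrix_assoc matrix_add_rdistrib')
  thus ?thesis by (simp add: bilinear_conv_bounded_bilinear)
qed

lemma congr_rep:
  fixes A V :: "real^'n^'n" and G :: "'n \<Rightarrow> nat \<Rightarrow> real"
  assumes "\<forall>i j. A$i$j = (\<Sum>c<k. G i c * G j c)"
  shows "(V ** A ** transpose V)$i$j = (\<Sum>c<k. (\<Sum>l\<in>UNIV. V$i$l * G l c) * (\<Sum>l\<in>UNIV. V$j$l * G l c))"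
proof -
  have "(V ** A ** transpose V)$i$j = (\<Sum>m\<in>UNIV. \<Sum>l\<in>UNIV. \<Sum>c<k. (V$i$l * G l c) * (V$j$m * G m c))"
    using assms by (simp add: matrix_matrix_mult_def transpose_def sum_distrib_left sum_distrib_right mult_ac)
  also have "\<dots> = (\<Sum>m\<in>UNIV. \<Sum>c<k. \<Sum>l\<in>UNIV. (V$i$l * G l c) * (V$j$m * G m c))"
    by (rule sum.cong[OF refl], rule sum.swap)
  also have "\<dots> = (\<Sum>c<k. \<Sum>m\<in>UNIV. \<Sum>l\<in>UNIV. (V$i$l * G l c) * (V$j$m * G m c))"
    by (rule sum.swap)
  also have "\<dots> = (\<Sum>c<k. \<Sum>l\<in>UNIV. \<Sum>m\<in>UNIV. (V$i$l * G l c) * (V$j$m * G m c))"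
    by (rule sum.cong[OF refl], rule sum.swap)
  also have "\<dots> = (\<Sum>c<k. (\<Sum>l\<in>UNIV. V$i$l * G l c) * (\<Sum>l\<in>UNIV. V$j$l * G l c))"
    by (simp add: sum_product)
  finally show ?thesis .
qed

lemma interior_lemma:
  fixes A Ainv :: "real^'n^'n" and G :: "'n \<Rightarrow> nat \<Rightarrow> real"
  assumes k: "k \<ge> 1" and Gpos: "\<forall>i. \<forall>c<k. G i c > 0"
    and Arep: "\<forall>i j. A$i$j = (\<Sum>c<k. G i c * G j c)"
    and inv1: "Ainv ** A = mat 1" and inv2: "A ** transpose Ainv = mat 1"
  shows "A \<in> (top_of_set sym_mats) interior_of cp_cone"
proof -
  have Asym: "transpose A = A" using Arep by (simp add: transpose_def vec_eq_iff mult.commute)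
  define \<beta> where "\<beta> U V = U ** A ** transpose V" for U V :: "real^'n^'n"
  interpret bb: bounded_bilinear \<beta> unfolding \<beta>_def by (rule bil)
  define L where "L x = snd x - transpose (snd x)" for x :: "(real^'n^'n) \<times> (real^'n^'n)"
  have linL: "bounded_linear L"
  proof -
    have "linear L" unfolding L_def
      by (rule linearI) (simp_all add: transpose_add transpose_diff transpose_scalar algebra_simps)
    thus ?thesis by (simp add: linear_conv_bounded_linear)
  qed
  define \<psi> where "\<psi> x = \<beta> (mat 1 + fst x) (mat 1 + fst x) + L x" for x
  define f' where "f' h = \<beta> (mat 1) (fst h) + \<beta> (fst h) (mat 1) + L h" for h :: "(real^'n^'n) \<times> (real^'n^'n)"
  have der: "(\<psi> has_derivative (\<lambda>h. \<beta> (mat 1 + fst x) (fst h) + \<beta> (fst h) (mat 1 + fst x) + L h)) (at x)" for x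
  proof -
    have d1: "((\<lambda>x. mat 1 + fst x) has_derivative (\<lambda>h. fst h)) (at x)"
      by (auto intro!: derivative_eq_intros)
    show ?thesis unfolding \<psi>_def
      by (rule has_derivative_add[OF bb.FDERIV[OF d1 d1] bounded_linear_imp_has_derivative[OF linL]])
  qed
  have d0: "(\<psi> has_derivative f') (at 0)" using der[of 0] by (simp add: f'_def[abs_def])
  have cont: "continuous_on UNIV \<psi>"
    by (rule has_derivative_continuous_on[where f'="\<lambda>x h. \<beta> (mat 1 + fst x) (fst h) + \<beta> (fst h) (mat 1 + fst x) + L h"])
       (use der in simp)
  define g' where "g' Y = ((1/4) *\<^sub>R ((Y + transpose Y) ** Ainv), (1/4) *\<^sub>R (Y - transpose Y))" for Y :: "real^'n^'n"
  have lin_g: "bounded_linear g'"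
  proof -
    have "linear g'" unfolding g'_def
      by (rule linearI) (simp_all add: transpose_add transpose_diff transpose_scalar matrix_add_rdistrib' scalar_matrix_assoc[symmetric] algebra_simps)
    thus ?thesis by (simp add: linear_conv_bounded_linear)
  qed
  have inv: "f' \<circ> g' = id"
  proof
    fix Y :: "real^'n^'n"
    define S where "S = Y + transpose Y"
    have St: "transpose S = S" unfolding S_def by (simp add: transpose_add add.commute)
    have e1: "\<beta> (mat 1) (fst (g' Y)) = (1/4) *\<^sub>R S"
    proof -
      have "\<beta> (mat 1) (fst (g' Y)) = A ** ((1/4) *\<^sub>R (transpose Ainv ** transpose S))"
        unfolding \<beta>_def g'_def S_def by (simp add: transpose_scalar matrix_transpose_mul)
      also have "\<dots> = (1/4) *\<^sub>R ((A ** transpose Ainv) ** transpose S)"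
        by (simp add: matrix_scalar_ac scalar_matrix_assoc matrix_mul_assoc)
      also have "\<dots> = (1/4) *\<^sub>R S" using inv2 St by simp
      finally show ?thesis .
    qed
    have e2: "\<beta> (fst (g' Y)) (mat 1) = (1/4) *\<^sub>R S"
    proof -
      have "\<beta> (fst (g' Y)) (mat 1) = ((1/4) *\<^sub>R (S ** Ainv)) ** A"
        unfolding \<beta>_def g'_def S_def by simp
      also have "\<dots> = (1/4) *\<^sub>R (S ** (Ainv ** A))"
        by (simp add: scalar_matrix_assoc[symmetric] matrix_mul_assoc)
      also have "\<dots> = (1/4) *\<^sub>R S" using inv1 by simp
      finally show ?thesis .
    qed
    have e3: "L (g' Y) = (1/4) *\<^sub>R (Y - transpose Y) - (1/4) *\<^sub>R (transpose Y - Y)"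
      unfolding L_def g'_def by (simp add: transpose_diff transpose_scalar)
    show "(f' \<circ> g') Y = id Y"
      unfolding comp_def f'_def e1 e2 e3 S_def by (simp add: vec_eq_iff field_simps)
  qed
  define GZ where "GZ Z i c = (\<Sum>l\<in>UNIV. (mat 1 + Z)$i$l * G l c)" for Z :: "real^'n^'n" and i c
  define T where "T = (\<Inter>i\<in>UNIV. \<Inter>c\<in>{..<k}. {x::(real^'n^'n) \<times> (real^'n^'n). 0 < GZ (fst x) i c})"
  have openT: "open T" unfolding T_def GZ_def
    by (intro open_INT ballI finite_lessThan finite_class.finite_UNIV open_Collect_less continuous_intros)
  have GZ0: "GZ 0 i c = G i c" for i c
    unfolding GZ_def by (simp add: mat_def if_distrib if_distribR cong del: if_weak_cong)
  have T0: "0 \<in> T" unfolding T_def using Gpos GZ0 by simp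
  have "\<psi> 0 \<in> interior (\<psi> ` T)"
    by (rule sussmann_open_mapping[of UNIV \<psi> 0 f' g' T]) (use cont d0 lin_g inv openT T0 in \<open>auto simp: interior_open\<close>)
  moreover have \<psi>0: "\<psi> 0 = A" by (simp add: \<psi>_def \<beta>_def L_def)
  ultimately have Ain: "A \<in> interior (\<psi> ` T)" by simp
  have sub: "sym_mats \<inter> interior (\<psi> ` T) \<subseteq> cp_cone"
  proof
    fix X assume X: "X \<in> sym_mats \<inter> interior (\<psi> ` T)"
    then obtain x where x: "x \<in> T" "X = \<psi> x" using interior_subset by blast
    define P where "P = \<beta> (mat 1 + fst x) (mat 1 + fst x)"
    have Psym: "transpose P = P" unfolding P_def \<beta>_def
      by (simp add: matrix_transpose_mul Asym matrix_mul_assoc)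
    have XP: "X = P + L x" using x(2) by (simp add: \<psi>_def P_def)
    have Lt: "transpose (L x) = - L x" unfolding L_def by (simp add: transpose_diff)
    have "transpose X = X" using X by (simp add: sym_mats_def)
    hence "P - L x = P + L x" using XP Psym Lt by (simp add: transpose_add)
    hence "L x = 0" by (simp add: vec_eq_iff)
    hence XP': "X = P" using XP by simp
    have pos: "\<forall>i. \<forall>c<k. 0 \<le> GZ (fst x) i c" using x(1) unfolding T_def by (auto intro: less_imp_le)
    have ent: "\<forall>i j. X $ i $ j = (\<Sum>c<k. GZ (fst x) i c * GZ (fst x) j c)"
      unfolding XP' P_def \<beta>_def GZ_def using congr_rep[OF Arep] by blast
    show "X \<in> cp_cone" unfolding cp_cone_def using k pos ent by blast
  qed
  show ?thesis unfolding interior_of_def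
  proof (intro CollectI exI[of _ "sym_mats \<inter> interior (\<psi> ` T)"] conjI)
    show "openin (top_of_set sym_mats) (sym_mats \<inter> interior (\<psi> ` T))" by (intro openin_open_Int open_interior)
    show "A \<in> sym_mats \<inter> interior (\<psi> ` T)" using Ain Asym by (simp add: sym_mats_def)
  qed (rule sub)
qed


lemma int_ball:
  fixes A :: "real^'n^'n"
  assumes "A \<in> (top_of_set sym_mats) interior_of cp_cone"
  shows "\<exists>r>0. \<forall>X\<in>sym_mats. dist X A < r \<longrightarrow> X \<in> cp_cone"
proof -
  from assms obtain U where U: "openin (top_of_set sym_mats) U" "A \<in> U" "U \<subseteq> cp_cone"
    unfolding interior_of_def by blast
  then obtain V where V: "open V" "U = sym_mats \<inter> V" by (auto simp: openin_open)
  then obtain r where r: "r > 0" "ball A r \<subseteq> V" using U(2) open_contains_ball by blast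
  show ?thesis
  proof (intro exI[of _ r] conjI ballI impI)
    fix X assume "X \<in> sym_mats" "dist X A < r"
    hence "X \<in> U" using r V by (auto simp: dist_commute)
    thus "X \<in> cp_cone" using U by blast
  qed (use r in auto)
qed

lemma closure_part:
  fixes A :: "real^'n^'n"
  assumes "A \<in> sym_mats" "A \<in> closure cp_cone"
  shows "A \<in> (top_of_set sym_mats) closure_of cp_cone"
proof -
  have e: "sym_mats \<inter> cp_cone = cp_cone" using cp_sym by blast
  show ?thesis using assms by (simp add: closure_of_subtopology e)
qed

lemma outer_sym: "transpose (outer b) = outer (b::real^'n)"
  by (simp add: outer_def transpose_def vec_eq_iff mult.commute)

theorem mainTheorem10:
  fixes A :: "real^'n^'n" and b :: "real^'n"
  assumes "A \<in> sym_mats"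
    and "\<forall>i. b $ i > 0"
  shows "(feas1 A b = {} \<longrightarrow> A \<notin> cp_cone)
    \<and> (feas1 A b \<noteq> {} \<longrightarrow>
        (fstar1 A b < 0 \<longrightarrow> A \<notin> cp_cone)
      \<and> (fstar1 A b = 0 \<longrightarrow> A \<in> (top_of_set sym_mats) frontier_of cp_cone)
      \<and> (fstar1 A b > 0 \<and> rank A < CARD('n) \<longrightarrow> A \<in> (top_of_set sym_mats) frontier_of cp_cone)
      \<and> (fstar1 A b > 0 \<and> rank A = CARD('n) \<longrightarrow> A \<in> (top_of_set sym_mats) interior_of cp_cone))"
proof -
  have bpos: "\<forall>i. b$i \<ge> 0" using assms(2) less_imp_le by blast
  have Asym: "transpose A = A" using assms(1) by (simp add: sym_mats_def)
  have cp0: "A \<in> cp_cone \<longleftrightarrow> 0 \<in> feas1 A b" by (simp add: feas1_def)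
  have symt: "A - t *\<^sub>R outer b \<in> sym_mats" for t
    using Asym by (simp add: sym_mats_def transpose_diff transpose_scalar outer_sym)
  have up: "t \<in> feas1 A b \<Longrightarrow> ereal t \<le> fstar1 A b" for t
    unfolding fstar1_def by (rule SUP_upper)
  have P1: "feas1 A b = {} \<longrightarrow> A \<notin> cp_cone" using cp0 by blast
  have P2: "fstar1 A b < 0 \<longrightarrow> A \<notin> cp_cone"
    using cp0 up[of 0] by (auto simp: zero_ereal_def)
  have P3: "fstar1 A b = 0 \<longrightarrow> A \<in> (top_of_set sym_mats) frontier_of cp_cone"
  proof
    assume f0: "fstar1 A b = 0"
    have nopos: "t \<le> 0" if "t \<in> feas1 A b" for t using up[OF that] f0 by (simp add: zero_ereal_def)
    define N where "N = norm (outer b)"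
    have N0: "N \<ge> 0" unfolding N_def by simp
    have "A \<in> closure cp_cone" unfolding closure_approachable
    proof (intro allI impI)
      fix e :: real assume e: "e > 0"
      define \<delta> where "\<delta> = e / (N + 1)"
      have d0: "\<delta> > 0" unfolding \<delta>_def using e N0 by simp
      have "ereal (-\<delta>) < fstar1 A b" using f0 d0 by (simp add: zero_ereal_def)
      then obtain t where t: "t \<in> feas1 A b" "ereal (-\<delta>) < ereal t"
        unfolding fstar1_def less_SUP_iff by blast
      have tle: "t \<le> 0" using nopos t(1) .
      have tl: "\<bar>t\<bar> < \<delta>" using t(2) tle by simp
      have "dist (A - t *\<^sub>R outer b) A = \<bar>t\<bar> * N" by (simp add: dist_norm N_def)
      also have "\<dots> \<le> \<delta> * N" using tl N0 by (simp add: mult_right_mono)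
      also have "\<dots> < \<delta> * (N + 1)" using d0 by simp
      also have "\<dots> = e" unfolding \<delta>_def using N0 by simp
      finally show "\<exists>y\<in>cp_cone. dist y A < e" using t(1) unfolding feas1_def by blast
    qed
    hence cl: "A \<in> (top_of_set sym_mats) closure_of cp_cone" using closure_part assms(1) by blast
    have "A \<notin> (top_of_set sym_mats) interior_of cp_cone"
    proof
      assume "A \<in> (top_of_set sym_mats) interior_of cp_cone"
      then obtain r where r: "r > 0" "\<forall>X\<in>sym_mats. dist X A < r \<longrightarrow> X \<in> cp_cone"
        using int_ball by blast
      define \<epsilon> where "\<epsilon> = r / (2 * (N + 1))"
      have e0: "\<epsilon> > 0" unfolding \<epsilon>_def using r N0 by (intro divide_pos_pos) auto
      have "dist (A - \<epsilon> *\<^sub>R outer b) A = \<epsilon> * N" using e0 by (simp add: dist_norm N_def)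
      also have "\<dots> < r" unfolding \<epsilon>_def using r N0 by (simp add: field_simps) (use mult_nonneg_nonneg[of N r] in linarith)
      finally have "A - \<epsilon> *\<^sub>R outer b \<in> cp_cone" using r symt by blast
      hence "\<epsilon> \<in> feas1 A b" by (simp add: feas1_def)
      thus False using nopos e0 by force
    qed
    thus "A \<in> (top_of_set sym_mats) frontier_of cp_cone" using cl by (simp add: frontier_of_def)
  qed
  have P45: "fstar1 A b > 0 \<Longrightarrow> \<exists>t>0. t \<in> feas1 A b"
  proof -
    assume "fstar1 A b > 0"
    hence "ereal 0 < fstar1 A b" by (simp add: zero_ereal_def)
    then obtain t where "t \<in> feas1 A b" "ereal 0 < ereal t" unfolding fstar1_def less_SUP_iff by blast
    thus ?thesis by auto
  qed
  have P4: "fstar1 A b > 0 \<and> rank A < CARD('n) \<longrightarrow> A \<in> (top_of_set sym_mats) frontier_of cp_cone"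
  proof
    assume H: "fstar1 A b > 0 \<and> rank A < CARD('n)"
    then obtain t where "t > 0" "t \<in> feas1 A b" using P45 by blast
    hence "0 \<in> feas1 A b" using feas_down[OF bpos] by (meson less_imp_le)
    hence Acp: "A \<in> cp_cone" using cp0 by blast
    hence cl: "A \<in> (top_of_set sym_mats) closure_of cp_cone"
      using closure_part assms(1) closure_subset by blast
    obtain x where x: "x \<noteq> 0" "A *v x = 0" using H matrix_nonfull_linear_equations_eq[of A] by auto
    have "A \<notin> (top_of_set sym_mats) interior_of cp_cone"
    proof
      assume "A \<in> (top_of_set sym_mats) interior_of cp_cone"
      then obtain r where r: "r > 0" "\<forall>X\<in>sym_mats. dist X A < r \<longrightarrow> X \<in> cp_cone"
        using int_ball by blast
      define N where "N = norm (mat 1 :: real^'n^'n)"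
      have N0: "N \<ge> 0" unfolding N_def by simp
      define \<epsilon> where "\<epsilon> = r / (2 * (N + 1))"
      have e0: "\<epsilon> > 0" unfolding \<epsilon>_def using r N0 by (intro divide_pos_pos) auto
      have "dist (A - \<epsilon> *\<^sub>R mat 1) A = \<epsilon> * N" using e0 by (simp add: dist_norm N_def)
      also have "\<dots> < r" unfolding \<epsilon>_def using r N0 by (simp add: field_simps) (use mult_nonneg_nonneg[of N r] in linarith)
      finally have "dist (A - \<epsilon> *\<^sub>R mat 1) A < r" .
      moreover have "A - \<epsilon> *\<^sub>R mat 1 \<in> sym_mats"
        using Asym by (simp add: sym_mats_def transpose_diff transpose_scalar)
      ultimately have "A - \<epsilon> *\<^sub>R mat 1 \<in> cp_cone" using r by blast
      hence ge: "x \<bullet> ((A - \<epsilon> *\<^sub>R mat 1) *v x) \<ge> 0" by (rule cp_psd)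
      have ev: "(A - \<epsilon> *\<^sub>R mat 1) *v x = - (\<epsilon> *\<^sub>R x)"
        using x(2) by (simp add: matrix_vector_mult_diff_rdistrib scaleR_matrix_vector_assoc[symmetric])
      have xx: "x \<bullet> x > 0" using x(1) by simp
      have "x \<bullet> ((A - \<epsilon> *\<^sub>R mat 1) *v x) = - (\<epsilon> * (x \<bullet> x))" unfolding ev by simp
      moreover have "\<epsilon> * (x \<bullet> x) > 0" using e0 xx by (rule mult_pos_pos)
      ultimately show False using ge by linarith
    qed
    thus "A \<in> (top_of_set sym_mats) frontier_of cp_cone" using cl by (simp add: frontier_of_def)
  qed
  have P5: "fstar1 A b > 0 \<and> rank A = CARD('n) \<longrightarrow> A \<in> (top_of_set sym_mats) interior_of cp_cone"
  proof
    assume H: "fstar1 A b > 0 \<and> rank A = CARD('n)"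
    then obtain t where t: "t > 0" "t \<in> feas1 A b" using P45 by blast
    then obtain m and B :: "'n \<Rightarrow> nat \<Rightarrow> real" where mB: "m \<ge> 1" "\<forall>i. \<forall>k<m. B i k \<ge> 0"
       "\<forall>i j. (A - t *\<^sub>R outer b) $ i $ j = (\<Sum>k<m. B i k * B j k)"
      unfolding feas1_def cp_cone_def by blast
    have pp: "\<forall>i. sqrt t * b$i > 0" using t(1) assms(2) by simp
    obtain G where G: "\<forall>i. \<forall>k<Suc m. G i k > 0"
      "\<forall>i j. (sqrt t * b$i) * (sqrt t * b$j) + (\<Sum>k<m. B i k * B j k) = (\<Sum>k<Suc m. G i k * G j k)"
      using pos_fact[of "\<lambda>i. sqrt t * b$i" m B] pp mB(2) by blast
    have Arep: "\<forall>i j. A$i$j = (\<Sum>k<Suc m. G i k * G j k)"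
    proof (intro allI)
      fix i j
      have "(sqrt t * b$i) * (sqrt t * b$j) = t * (b$i * b$j)" using t(1)
        by (simp add: algebra_simps)
      hence "A$i$j = (sqrt t * b$i) * (sqrt t * b$j) + (\<Sum>k<m. B i k * B j k)"
        using mB(3)[rule_format, of i j] unfolding outer_def by (simp only:) simp
      thus "A$i$j = (\<Sum>k<Suc m. G i k * G j k)" using G(2) by simp
    qed
    have "det A \<noteq> 0" using H det_eq_0_rank[of A] by simp
    hence "invertible A" by (simp add: invertible_det_nz)
    then obtain Ainv where inv1: "Ainv ** A = mat 1" using invertible_left_inverse by blast
    have inv2: "A ** transpose Ainv = mat 1"
      using arg_cong[OF inv1, of transpose] Asym by (simp add: matrix_transpose_mul)
    show "A \<in> (top_of_set sym_mats) interior_of cp_cone"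
      by (rule interior_lemma[OF _ G(1) Arep inv1 inv2]) simp
  qed
  show ?thesis using P1 P2 P3 P4 P5 by blast
qed

end
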